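(* Let $G=(V,E)$ be a finite, simple, connected, undirected graph with vertices $v_1,\dots,v_n$, adjacency matrix $\mathbf{A}$, degree vector $\mathbf{d}=\mathbf{A}\mathbf{1}$, degree matrix $\mathbf{D}=\mathrm{diag}(\mathbf{d})$, and lazy random walk matrix $\mathbf{P}=\tfrac12(\mathbf{I}+\mathbf{A}\mathbf{D}^{-1})$. Fix a vertex $v\in V$, a non-negative signal $\mathbf{x}\in\mathbb{R}^n$ (all entries $\ge 0$), a constant $c>1$, a positive integer $N$, and $\epsilon>0$. Then there exists $K\in\mathbb{N}$ such that the following holds. Let $\mathcal{F}=\mathcal{F}_{\mathrm{A}}\sqcup\mathcal{F}_{\mathrm{C}}$ be any finite, non-empty filter bank (non-decoupled architecture) in which every aggregation filter $f\in\mathcal{F}_{\mathrm{A}}$ is of the form $F_k(\mathbf{x})=\mathbf{P}^k\mathbf{x}$ with $k\ge K$, every comparison filter $f\in\mathcal{F}_{\mathrm{C}}$ is of the form $F_{k_1,k_2}(\mathbf{x})=(\mathbf{P}^{k_1}-\mathbf{P}^{k_2})\mathbf{x}$ with $k_1\neq k_2$ and $k_1,k_2\ge K$, and $|\mathcal{F}_{\mathrm{C}}|\le N$; write $\mathbf{h}_f=f(\mathbf{x})\in\mathbb{R}^n$. Let $(\bar{\mathbf{s}}_f[v])_{f\in\mathcal{F}}$ be any non-negative attention weights at $v$ such that the representation is $c$-band-dominant at $v$, i.e. $$\max\{\bar{\mathbf{s}}_f[v]: f\in\mathcal{F}_{\mathrm{C}}\}=c\cdot\max\{\bar{\mathbf{s}}_f[v]: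 f\in\mathcal{F}_{\mathrm{A}}\}.$$ Then $$\sum_{f\in\mathcal{F}_{\mathrm{C}}}\bar{\mathbf{s}}_f[v]\,\mathbf{h}_f[v]\;\le\;\epsilon\, c\sum_{f\in\mathcal{F}_{\mathrm{A}}}\bar{\mathbf{s}}_f[v]\,\mathbf{h}_f[v].$$
   Context: In the "non-decoupled architecture" the filter responses are taken without any learned transformation (the map applied after filtering is the identity), and a single set of normalized attention weights $\bar{\mathbf{s}}_f[v]$ (e.g. a softmax over the whole filter bank, hence non-negative) is assigned at each vertex to all filters in $\mathcal{F}=\mathcal{F}_{\mathrm{A}}\sqcup\mathcal{F}_{\mathrm{C}}$. Aggregation filters $F_k$ are low-pass filters and comparison filters $F_{k_1,k_2}$ are band-pass (diffusion-wavelet) filters. For $\mathbf{x}\in\mathbb{R}^n$, $\mathbf{h}_f[v]$ denotes the entry of $\mathbf{h}_f$ at vertex $v$. *)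

theory Defs
  imports "HOL-Analysis.Analysis"
begin

definition simple_adj :: "real^'n^'n \<Rightarrow> bool" where
  "simple_adj A \<longleftrightarrow> (\<forall>i j. A$i$j = 0 \<or> A$i$j = 1) \<and> (\<forall>i j. A$i$j = A$j$i) \<and> (\<forall>i. A$i$i = 0)"

definition graph_connected :: "real^'n^'n \<Rightarrow> bool" where
  "graph_connected A \<longleftrightarrow> (\<forall>i j. (\<lambda>a b. A$a$b = 1)\<^sup>*\<^sup>* i j)"

definition degree_vec :: "real^'n^'n \<Rightarrow> real^'n" where
  "degree_vec A = A *v 1"

definition degree_mat :: "real^'n^'n \<Rightarrow> real^'n^'n" where
  "degree_mat A = (\<chi> i j. if i = j then degree_vec A $ i else 0)"

definition lazy_walk :: "real^'n^'n \<Rightarrow> real^'n^'n" where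
  "lazy_walk A = (1/2) *\<^sub>R (mat 1 + A ** matrix_inv (degree_mat A))"

datatype filt = Agg nat | Comp nat nat

definition is_agg :: "filt \<Rightarrow> bool" where
  "is_agg f \<longleftrightarrow> (\<exists>k. f = Agg k)"

definition is_comp :: "filt \<Rightarrow> bool" where
  "is_comp f \<longleftrightarrow> (\<exists>k1 k2. f = Comp k1 k2)"

definition walk_pow :: "real^'n^'n \<Rightarrow> nat \<Rightarrow> real^'n \<Rightarrow> real^'n" where
  "walk_pow P k x = ((\<lambda>y. P *v y) ^^ k) x"

text \<open>Filter response h_f = f(x) (non-decoupled: no learned map afterwards).\<close>
fun filt_resp :: "real^'n^'n \<Rightarrow> real^'n \<Rightarrow> filt \<Rightarrow> real^'n" where
  "filt_resp P x (Agg k) = walk_pow P k x"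
| "filt_resp P x (Comp k1 k2) = walk_pow P k1 x - walk_pow P k2 x"

end

theory Submission
  imports Defs
begin


definition Dinv :: "real^'n^'n \<Rightarrow> real^'n^'n" where
  "Dinv A = (\<chi> i j. if i = j then 1 / degree_vec A $ i else 0)"

lemma deg_eq: "degree_vec A $ i = (\<Sum>j\<in>UNIV. A$i$j)"
  by (simp add: degree_vec_def matrix_vector_mult_def)

lemma diag_mm:
  "((\<chi> i j. if i = j then a i else 0) ** (\<chi> i j. if i = j then b i else 0) :: real^'n^'n)
   = (\<chi> i j. if i = j then a i * b i else 0)"
proof -
  have "(\<Sum>k\<in>UNIV. (if i = k then a i else 0) * (if k = j then b k else 0))
      = (\<Sum>k\<in>UNIV. if k = i then (if i = j then a i * b i else 0) else 0)" for i j :: 'n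
    by (rule sum.cong) auto
  then show ?thesis unfolding matrix_matrix_mult_def by (simp add: vec_eq_iff)
qed

lemma mat1_diag: "(mat 1 :: real^'n^'n) = (\<chi> i j. if i = j then 1 else 0)"
  by (simp add: mat_def)

lemma matrix_inv_deg:
  assumes "\<forall>i. degree_vec A $ i \<noteq> 0"
  shows "matrix_inv (degree_mat A) = Dinv A"
proof -
  have 1: "degree_mat A ** Dinv A = mat 1" "Dinv A ** degree_mat A = mat 1"
    unfolding degree_mat_def Dinv_def diag_mm mat1_diag using assms by (simp_all add: vec_eq_iff)
  define B where "B = matrix_inv (degree_mat A)"
  have "degree_mat A ** B = mat 1 \<and> B ** degree_mat A = mat 1"
    unfolding B_def matrix_inv_def by (rule someI[of _ "Dinv A"]) (use 1 in blast)
  then have h: "B ** degree_mat A = mat 1" by blast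
  have "B = B ** mat 1" by (simp add: matrix_mul_rid)
  also have "\<dots> = B ** (degree_mat A ** Dinv A)" using 1 by simp
  also have "\<dots> = (B ** degree_mat A) ** Dinv A" by (simp add: matrix_mul_assoc)
  also have "\<dots> = Dinv A" using h by (simp add: matrix_mul_lid)
  finally have "B = Dinv A" .
  then show ?thesis by (simp add: B_def)
qed

lemma Dinv_apply: "Dinv A *v y = (\<chi> j. y$j / degree_vec A $ j)"
proof -
  have "(\<Sum>k\<in>UNIV. (if j = k then 1 / degree_vec A $ j else 0) * y$k)
      = (\<Sum>k\<in>UNIV. if k = j then y$j / degree_vec A $ j else 0)" for j
    by (rule sum.cong) auto
  then show ?thesis unfolding matrix_vector_mult_def Dinv_def by (simp add: vec_eq_iff)
qed

lemma lazy_apply: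
  assumes "\<forall>i. degree_vec A $ i \<noteq> 0"
  shows "lazy_walk A *v y = (\<chi> i. y$i/2 + (\<Sum>j\<in>UNIV. A$i$j * y$j / degree_vec A $ j)/2)"
proof -
  have "lazy_walk A *v y = (1/2) *\<^sub>R ((mat 1 + A ** Dinv A) *v y)"
    unfolding lazy_walk_def matrix_inv_deg[OF assms] by (rule scaleR_matrix_vector_assoc[symmetric])
  also have "(mat 1 + A ** Dinv A) *v y = y + A *v (Dinv A *v y)"
    by (simp only: matrix_vector_mult_add_rdistrib matrix_vector_mul_lid matrix_vector_mul_assoc)
  also have "(1/2) *\<^sub>R (y + A *v (Dinv A *v y)) = (\<chi> i. y$i/2 + (\<Sum>j\<in>UNIV. A$i$j * y$j / degree_vec A $ j)/2)"
    unfolding Dinv_apply by (simp add: vec_eq_iff matrix_vector_mult_def)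
  finally show ?thesis .
qed



definition Qop :: "real^'n^'n \<Rightarrow> real^'n \<Rightarrow> real^'n" where
 "Qop A g = (\<chi> i. g$i/2 + (\<Sum>j\<in>UNIV. A$i$j * g$j) / (2 * degree_vec A $ i))"

lemma Q_le:
  assumes nn: "\<forall>i j. A$i$j \<ge> 0" and dp: "\<forall>i. degree_vec A $ i > 0" and g: "\<forall>j. g$j \<le> M"
  shows "Qop A g $ i \<le> M"
proof -
  have "(\<Sum>j\<in>UNIV. A$i$j * g$j) \<le> (\<Sum>j\<in>UNIV. A$i$j * M)"
    by (rule sum_mono) (simp add: g nn mult_left_mono)
  also have "\<dots> = degree_vec A $ i * M" by (simp add: deg_eq sum_distrib_right)
  finally have S: "(\<Sum>j\<in>UNIV. A$i$j * g$j) \<le> degree_vec A $ i * M" .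
  have d: "degree_vec A $ i > 0" using dp by auto
  have "(\<Sum>j\<in>UNIV. A$i$j * g$j) / (2 * degree_vec A $ i) \<le> M/2"
    using S d by (simp add: divide_simps mult.commute)
  then show ?thesis using g[rule_format, of i] by (simp add: Qop_def)
qed

lemma Q_ge:
  assumes nn: "\<forall>i j. A$i$j \<ge> 0" and dp: "\<forall>i. degree_vec A $ i > 0" and g: "\<forall>j. m \<le> g$j"
  shows "m \<le> Qop A g $ i"
proof -
  have "(\<Sum>j\<in>UNIV. A$i$j * m) \<le> (\<Sum>j\<in>UNIV. A$i$j * g$j)"
    by (rule sum_mono) (simp add: g nn mult_left_mono)
  moreover have "(\<Sum>j\<in>UNIV. A$i$j * m) = degree_vec A $ i * m" by (simp add: deg_eq sum_distrib_right)
  ultimately have S: "degree_vec A $ i * m \<le> (\<Sum>j\<in>UNIV. A$i$j * g$j)" by simp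
  have d: "degree_vec A $ i > 0" using dp by auto
  have "m/2 \<le> (\<Sum>j\<in>UNIV. A$i$j * g$j) / (2 * degree_vec A $ i)"
    using S d by (simp add: divide_simps mult.commute)
  then show ?thesis using g[rule_format, of i] by (simp add: Qop_def)
qed

lemma Q_eq:
  assumes nn: "\<forall>i j. A$i$j \<ge> 0" and dp: "\<forall>i. degree_vec A $ i > 0" and g: "\<forall>j. g$j \<le> M"
    and e: "Qop A g $ i = M"
  shows "g$i = M \<and> (\<forall>u. A$i$u = 1 \<longrightarrow> g$u = M)"
proof -
  have "(\<Sum>j\<in>UNIV. A$i$j * g$j) \<le> (\<Sum>j\<in>UNIV. A$i$j * M)"
    by (rule sum_mono) (simp add: g nn mult_left_mono)
  also have "\<dots> = degree_vec A $ i * M" by (simp add: deg_eq sum_distrib_right)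
  finally have S: "(\<Sum>j\<in>UNIV. A$i$j * g$j) \<le> degree_vec A $ i * M" .
  have d: "degree_vec A $ i > 0" using dp by auto
  have S2: "(\<Sum>j\<in>UNIV. A$i$j * g$j) / (2 * degree_vec A $ i) \<le> M/2"
    using S d by (simp add: divide_simps mult.commute)
  have gi: "g$i \<le> M" using g by auto
  from e have e2: "g$i/2 + (\<Sum>j\<in>UNIV. A$i$j * g$j) / (2 * degree_vec A $ i) = M" by (simp add: Qop_def)
  have 1: "g$i = M" using e2 S2 gi by linarith
  have "(\<Sum>j\<in>UNIV. A$i$j * g$j) / (2 * degree_vec A $ i) = M/2" using e2 1 by linarith
  then have "(\<Sum>j\<in>UNIV. A$i$j * g$j) = degree_vec A $ i * M" using d by (simp add: divide_simps)
  then have "(\<Sum>j\<in>UNIV. A$i$j * (M - g$j)) = 0"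
    by (simp add: right_diff_distrib sum_subtractf deg_eq sum_distrib_right)
  then have z: "\<forall>j\<in>UNIV. A$i$j * (M - g$j) = 0"
    by (subst sum_nonneg_eq_0_iff[symmetric]) (auto simp: nn g)
  show ?thesis
  proof (intro conjI 1 allI impI)
    fix u assume "A$i$u = 1" then show "g$u = M" using z[rule_format, of u] by simp
  qed
qed

lemma Q_neg: "Qop A (-g) = - Qop A g"
  by (simp add: Qop_def vec_eq_iff sum_negf)

lemma Qpow_neg: "(Qop A ^^ k) (-g) = - (Qop A ^^ k) g"
  by (induction k) (auto simp: Q_neg)

lemma Q_tendsto:
  assumes dp: "\<forall>i. degree_vec A $ i > 0" and "(G \<longlongrightarrow> g) F"
  shows "((\<lambda>j. Qop A (G j)) \<longlongrightarrow> Qop A g) F"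
  unfolding Qop_def by (intro vec_tendstoI) (simp, intro tendsto_intros assms, use dp in \<open>auto simp: less_imp_neq[symmetric]\<close>)

lemma Qpow_tendsto:
  assumes dp: "\<forall>i. degree_vec A $ i > 0" and "(G \<longlongrightarrow> g) F"
  shows "((\<lambda>j. (Qop A ^^ t) (G j)) \<longlongrightarrow> (Qop A ^^ t) g) F"
  by (induction t) (auto intro: Q_tendsto[OF dp] assms)

lemma Q_mass:
  assumes sym: "\<forall>i j. A$i$j = A$j$i" and dp: "\<forall>i. degree_vec A $ i > 0"
  shows "(\<Sum>i\<in>UNIV. degree_vec A $ i * Qop A g $ i) = (\<Sum>i\<in>UNIV. degree_vec A $ i * g $ i)"
proof -
  have "(\<Sum>i\<in>UNIV. degree_vec A $ i * Qop A g $ i)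
      = (\<Sum>i\<in>UNIV. degree_vec A $ i * g$i / 2 + (\<Sum>j\<in>UNIV. A$i$j * g$j) / 2)"
  proof (intro sum.cong refl)
    fix i
    have "degree_vec A $ i \<noteq> 0" using dp by (metis less_irrefl)
    then show "degree_vec A $ i * Qop A g $ i = degree_vec A $ i * g$i / 2 + (\<Sum>j\<in>UNIV. A$i$j * g$j) / 2"
      by (simp add: Qop_def distrib_left)
  qed
  also have "\<dots> = (\<Sum>i\<in>UNIV. degree_vec A $ i * g$i) / 2 + (\<Sum>i\<in>UNIV. \<Sum>j\<in>UNIV. A$i$j * g$j) / 2"
    by (simp add: sum.distrib sum_divide_distrib)
  also have "(\<Sum>i\<in>UNIV. \<Sum>j\<in>UNIV. A$i$j * g$j) = (\<Sum>j\<in>UNIV. \<Sum>i\<in>UNIV. A$j$i * g$j)"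
    by (subst sum.swap) (simp add: sym)
  also have "\<dots> = (\<Sum>j\<in>UNIV. degree_vec A $ j * g$j)"
    by (simp add: deg_eq sum_distrib_right)
  finally show ?thesis by simp
qed

lemma Qpow_mass:
  assumes sym: "\<forall>i j. A$i$j = A$j$i" and dp: "\<forall>i. degree_vec A $ i > 0"
  shows "(\<Sum>i\<in>UNIV. degree_vec A $ i * (Qop A ^^ k) g $ i) = (\<Sum>i\<in>UNIV. degree_vec A $ i * g $ i)"
  by (induction k) (auto simp: Q_mass[OF assms])



lemma Qpow_le:
  assumes nn: "\<forall>i j. A$i$j \<ge> 0" and dp: "\<forall>i. degree_vec A $ i > 0" and g: "\<forall>j. g$j \<le> M"
  shows "\<forall>i. (Qop A ^^ t) g $ i \<le> M"
proof (induction t)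
  case 0 then show ?case using g by simp
next
  case (Suc t)
  have "Qop A ((Qop A ^^ t) g) $ i \<le> M" for i by (rule Q_le[OF nn dp Suc.IH])
  then show ?case by simp
qed

lemma Qpow_ge:
  assumes nn: "\<forall>i j. A$i$j \<ge> 0" and dp: "\<forall>i. degree_vec A $ i > 0" and g: "\<forall>j. m \<le> g$j"
  shows "\<forall>i. m \<le> (Qop A ^^ t) g $ i"
proof (induction t)
  case 0 then show ?case using g by simp
next
  case (Suc t)
  have "m \<le> Qop A ((Qop A ^^ t) g) $ i" for i by (rule Q_ge[OF nn dp Suc.IH])
  then show ?case by simp
qed

lemma propag:
  assumes nn: "\<forall>i j. A$i$j \<ge> 0" and dp: "\<forall>i. degree_vec A $ i > 0" and g: "\<forall>j. g$j \<le> M"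
  shows "(Qop A ^^ t) g $ i = M \<Longrightarrow> l \<le> t \<Longrightarrow> ((\<lambda>a b. A$a$b = 1) ^^ l) i w \<Longrightarrow> g$w = M"
proof (induction t arbitrary: i l w)
  case 0
  then show ?case by simp
next
  case (Suc t)
  define h where "h = (Qop A ^^ t) g"
  have hle: "\<forall>j. h$j \<le> M" unfolding h_def using Qpow_le[OF nn dp g] by auto
  have "Qop A h $ i = M" using Suc.prems(1) by (simp add: h_def)
  from Q_eq[OF nn dp hle this] have hi: "h$i = M" and hu: "\<forall>u. A$i$u = 1 \<longrightarrow> h$u = M" by auto
  show ?case
  proof (cases l)
    case 0
    then have "w = i" using Suc.prems(3) by simp
    then show ?thesis using Suc.IH[of i 0 i] hi by (simp add: h_def)
  next
    case (Suc l')
    then obtain u where u: "A$i$u = 1" "((\<lambda>a b. A$a$b = 1) ^^ l') u w"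
      using relpowp_Suc_D2[where P="\<lambda>a b. A$a$b = 1" and n=l' and x=i and z=w] Suc.prems(3) \<open>l = Suc l'\<close> by auto
    have "l' \<le> t" using Suc Suc.prems(2) by simp
    then show ?thesis using Suc.IH[of u l' w] hu u by (simp add: h_def)
  qed
qed

lemma conn_bound:
  fixes A :: "real^'n^'n"
  assumes "graph_connected A"
  shows "\<exists>L. \<forall>i w. \<exists>l\<le>L. ((\<lambda>a b. A$a$b = 1) ^^ l) i w"
proof -
  have ex: "\<forall>p::'n\<times>'n. \<exists>l. ((\<lambda>a b. A$a$b = 1) ^^ l) (fst p) (snd p)"
  proof
    fix p :: "'n\<times>'n"
    have "(\<lambda>a b. A$a$b = 1)\<^sup>*\<^sup>* (fst p) (snd p)" using assms unfolding graph_connected_def by simp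
    then show "\<exists>l. ((\<lambda>a b. A$a$b = 1) ^^ l) (fst p) (snd p)" by (rule rtranclp_imp_relpowp)
  qed
  have "\<exists>f. \<forall>p::'n\<times>'n. ((\<lambda>a b. A$a$b = 1) ^^ f p) (fst p) (snd p)"
    by (rule choice) (rule ex)
  then obtain f where f: "\<forall>p::'n\<times>'n. ((\<lambda>a b. A$a$b = 1) ^^ f p) (fst p) (snd p)" by blast
  have "\<forall>i w. \<exists>l\<le>Max (range f). ((\<lambda>a b. A$a$b = 1) ^^ l) i w"
  proof (intro allI)
    fix i w
    have "f (i,w) \<le> Max (range f)" by (rule Max_ge) auto
    moreover have "((\<lambda>a b. A$a$b = 1) ^^ f (i,w)) i w" using f[rule_format, of "(i,w)"] by simp
    ultimately show "\<exists>l\<le>Max (range f). ((\<lambda>a b. A$a$b = 1) ^^ l) i w" by (intro exI conjI)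
  qed
  then show ?thesis by (rule exI)
qed



lemma limA:
  fixes g0 :: "real^'n"
  assumes nn: "\<forall>i j. A$i$j \<ge> 0" and dp: "\<forall>i. degree_vec A $ i > 0"
    and L: "\<forall>i w. \<exists>l\<le>L. ((\<lambda>a b. A$a$b = 1) ^^ l) i w"
    and r: "strict_mono r" and lim: "(\<lambda>j. (Qop A ^^ (r j)) g0) \<longlonglongrightarrow> gs"
  shows "\<exists>Lm Mx. Mx \<longlonglongrightarrow> Lm \<and> (\<forall>k i. (Qop A ^^ k) g0 $ i \<le> Mx k) \<and> (\<forall>w. gs$w = Lm)"
proof -
  define G where "G k = (Qop A ^^ k) g0" for k
  define Mx where "Mx k = Max (range (\<lambda>i. G k $ i))" for k
  have Mge: "\<forall>k i. G k $ i \<le> Mx k" unfolding Mx_def by (auto intro: Max_ge)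
  have Mat: "\<forall>k. \<exists>i. G k $ i = Mx k"
  proof
    fix k
    have "Mx k \<in> range (\<lambda>i. G k $ i)" unfolding Mx_def by (rule Max_in) auto
    then show "\<exists>i. G k $ i = Mx k" by auto
  qed
  have m0: "\<forall>j. - norm g0 \<le> g0$j"
  proof
    fix j
    have "\<bar>g0$j\<bar> \<le> norm g0" by (rule component_le_norm_cart)
    then show "- norm g0 \<le> g0$j" by (simp add: abs_le_iff)
  qed
  have Mlow: "\<forall>k. - norm g0 \<le> Mx k"
  proof
    fix k
    obtain i :: 'n where True by simp
    have "- norm g0 \<le> G k $ i" using Qpow_ge[OF nn dp m0] unfolding G_def by blast
    also have "\<dots> \<le> Mx k" using Mge by blast
    finally show "- norm g0 \<le> Mx k" .
  qed
  have dec: "decseq Mx"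
  proof (rule decseq_SucI)
    fix k
    have GS: "G (Suc k) = Qop A (G k)" unfolding G_def by simp
    have "\<forall>j. G k $ j \<le> Mx k" using Mge by blast
    then have "\<forall>i. G (Suc k) $ i \<le> Mx k"
      unfolding GS using Q_le[OF nn dp] by blast
    then show "Mx (Suc k) \<le> Mx k" unfolding Mx_def[of "Suc k"] by (simp add: Max_le_iff)
  qed
  obtain Lm where Lm: "Mx \<longlonglongrightarrow> Lm" "\<forall>i. Lm \<le> Mx i"
    by (rule decseq_convergent[OF dec Mlow])
  have tlim: "(\<lambda>j. G (r j + t)) \<longlonglongrightarrow> (Qop A ^^ t) gs" for t
  proof -
    have "G (r j + t) = (Qop A ^^ t) ((Qop A ^^ (r j)) g0)" for j
      unfolding G_def by (simp add: funpow_add add.commute)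
    then show ?thesis using Qpow_tendsto[OF dp lim] by simp
  qed
  have Mlim: "(\<lambda>j. Mx (r j + t)) \<longlonglongrightarrow> Lm" for t
  proof -
    have "strict_mono (\<lambda>j. r j + t)" using r by (simp add: strict_mono_def)
    from LIMSEQ_subseq_LIMSEQ[OF Lm(1) this] show ?thesis by (simp add: o_def)
  qed
  have le: "(Qop A ^^ t) gs $ i \<le> Lm" for t i
    by (rule tendsto_le[OF trivial_limit_sequentially Mlim[of t] tendsto_vec_nth[OF tlim[of t]]])
       (simp add: Mge)
  have att: "\<exists>i. (Qop A ^^ L) gs $ i = Lm"
  proof (rule ccontr)
    assume "\<not> ?thesis"
    then have lt: "\<forall>i. (Qop A ^^ L) gs $ i < Lm" using le[of L] by (simp add: order_less_le)
    have "\<forall>i. eventually (\<lambda>j. G (r j + L) $ i < Lm) sequentially"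
    proof
      fix i
      show "eventually (\<lambda>j. G (r j + L) $ i < Lm) sequentially"
        by (rule order_tendstoD(2)[OF tendsto_vec_nth[OF tlim]]) (use lt in blast)
    qed
    then have "eventually (\<lambda>j. \<forall>i. G (r j + L) $ i < Lm) sequentially"
      by (intro eventually_all_finite) blast
    then obtain j where j: "\<forall>i. G (r j + L) $ i < Lm" by (auto simp: eventually_sequentially)
    obtain i where "G (r j + L) $ i = Mx (r j + L)" using Mat by blast
    moreover have "G (r j + L) $ i < Lm" using j by blast
    moreover have "Lm \<le> Mx (r j + L)" using Lm(2) by blast
    ultimately show False by linarith
  qed
  then obtain i0 where i0: "(Qop A ^^ L) gs $ i0 = Lm" by blast
  have gsle: "\<forall>j. gs$j \<le> Lm" using le[of 0] by simp
  have "\<forall>w. gs$w = Lm"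
  proof
    fix w
    obtain l where "l \<le> L" "((\<lambda>a b. A$a$b = 1) ^^ l) i0 w" using L by blast
    then show "gs$w = Lm" using propag[OF nn dp gsle i0] by blast
  qed
  then show ?thesis using Lm(1) Mge unfolding G_def by blast
qed



lemma conv:
  fixes g0 :: "real^'n"
  assumes nn: "\<forall>i j. A$i$j \<ge> 0" and dp: "\<forall>i. degree_vec A $ i > 0"
    and L: "\<forall>i w. \<exists>l\<le>L. ((\<lambda>a b. A$a$b = 1) ^^ l) i w"
  shows "\<exists>Lm. \<forall>i. (\<lambda>k. (Qop A ^^ k) g0 $ i) \<longlonglongrightarrow> Lm"
proof -
  define G where "G k = (Qop A ^^ k) g0" for k
  have m0: "\<forall>j. - norm g0 \<le> g0$j" and M0: "\<forall>j. g0$j \<le> norm g0"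
  proof -
    have "\<bar>g0$j\<bar> \<le> norm g0" for j by (rule component_le_norm_cart)
    then have "g0$j \<le> norm g0 \<and> - g0$j \<le> norm g0" for j by (simp add: abs_le_iff)
    then show "\<forall>j. - norm g0 \<le> g0$j" "\<forall>j. g0$j \<le> norm g0" by (simp_all add: minus_le_iff)
  qed
  have ab: "\<bar>G k $ i\<bar> \<le> norm g0" for k i
  proof -
    have "- norm g0 \<le> G k $ i" using Qpow_ge[OF nn dp m0, of k] unfolding G_def by blast
    moreover have "G k $ i \<le> norm g0" using Qpow_le[OF nn dp M0, of k] unfolding G_def by blast
    ultimately show ?thesis by (simp add: abs_le_iff)
  qed
  have "norm (G k) \<le> CARD('n) * norm g0" for k
  proof -
    have "norm (G k) \<le> (\<Sum>i\<in>UNIV. \<bar>G k $ i\<bar>)" by (rule norm_le_l1_cart)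
    also have "\<dots> \<le> (\<Sum>i\<in>(UNIV::'n set). norm g0)" by (rule sum_mono) (rule ab)
    finally show ?thesis by simp
  qed
  then have "bounded (range G)" unfolding bounded_iff by blast
  then obtain gs r where r: "strict_mono r" and lim: "(G \<circ> r) \<longlonglongrightarrow> gs"
    using bounded_imp_convergent_subsequence by blast
  have lim1: "(\<lambda>j. (Qop A ^^ (r j)) g0) \<longlonglongrightarrow> gs" using lim by (simp add: o_def G_def)
  have lim2: "(\<lambda>j. (Qop A ^^ (r j)) (-g0)) \<longlonglongrightarrow> -gs"
    unfolding Qpow_neg by (intro tendsto_minus lim1)
  obtain Lm Mx where A1: "Mx \<longlonglongrightarrow> Lm" "\<forall>k i. (Qop A ^^ k) g0 $ i \<le> Mx k" "\<forall>w. gs$w = Lm"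
    using limA[OF nn dp L r lim1] by blast
  obtain Lm' Mx' where A2: "Mx' \<longlonglongrightarrow> Lm'" "\<forall>k i. (Qop A ^^ k) (-g0) $ i \<le> Mx' k" "\<forall>w. (-gs)$w = Lm'"
    using limA[OF nn dp L r lim2] by blast
  have e: "Lm' = - Lm" using A1(3) A2(3) by simp
  show ?thesis
  proof (intro exI allI)
    fix i
    show "(\<lambda>k. (Qop A ^^ k) g0 $ i) \<longlonglongrightarrow> Lm"
    proof (rule tendsto_sandwich[where f="\<lambda>k. - Mx' k" and h=Mx])
      show "\<forall>\<^sub>F k in sequentially. - Mx' k \<le> (Qop A ^^ k) g0 $ i"
      proof (rule always_eventually, rule allI)
        fix k
        have "(Qop A ^^ k) (-g0) $ i \<le> Mx' k" using A2(2) by blast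
        then show "- Mx' k \<le> (Qop A ^^ k) g0 $ i" by (simp add: Qpow_neg)
      qed
      show "\<forall>\<^sub>F k in sequentially. (Qop A ^^ k) g0 $ i \<le> Mx k" using A1(2) by simp
      show "(\<lambda>k. - Mx' k) \<longlonglongrightarrow> Lm" using tendsto_minus[OF A2(1)] e by simp
      show "Mx \<longlonglongrightarrow> Lm" by (rule A1(1))
    qed
  qed
qed



lemma walk_pow_Suc: "walk_pow P (Suc k) x = P *v walk_pow P k x"
  by (simp add: walk_pow_def)

lemma walk_pow_zero: "walk_pow P k 0 = 0"
  by (induction k) (simp_all add: walk_pow_Suc, simp add: walk_pow_def)

lemma walk_formula:
  assumes dp: "\<forall>i. degree_vec A $ i > 0"
  shows "walk_pow (lazy_walk A) k x = (\<chi> i. degree_vec A $ i * (Qop A ^^ k) (\<chi> j. x$j / degree_vec A $ j) $ i)"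
proof (induction k)
  case 0
  have "degree_vec A $ i * (x$i / degree_vec A $ i) = x$i" for i
    using dp[rule_format, of i] by simp
  then show ?case by (simp add: walk_pow_def vec_eq_iff)
next
  case (Suc k)
  define G where "G = (Qop A ^^ k) (\<chi> j. x$j / degree_vec A $ j)"
  have dne: "degree_vec A $ i \<noteq> 0" for i using dp[rule_format, of i] by simp
  have "walk_pow (lazy_walk A) (Suc k) x = lazy_walk A *v (\<chi> i. degree_vec A $ i * G $ i)"
    by (simp add: walk_pow_Suc Suc G_def)
  also have "\<dots> = (\<chi> i. degree_vec A $ i * G $ i / 2 + (\<Sum>j\<in>UNIV. A$i$j * G$j)/2)"
  proof -
    have "(\<Sum>j\<in>UNIV. A$i$j * (degree_vec A $ j * G$j) / degree_vec A $ j) = (\<Sum>j\<in>UNIV. A$i$j * G$j)" for i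
      by (rule sum.cong) (simp_all add: dne)
    then show ?thesis using dne by (simp add: lazy_apply vec_eq_iff)
  qed
  also have "\<dots> = (\<chi> i. degree_vec A $ i * Qop A G $ i)"
  proof -
    have "degree_vec A $ i * G $ i / 2 + (\<Sum>j\<in>UNIV. A$i$j * G$j)/2 = degree_vec A $ i * Qop A G $ i" for i
      using dne[of i] by (simp add: Qop_def distrib_left)
    then show ?thesis by (simp add: vec_eq_iff)
  qed
  finally show ?case by (simp add: G_def)
qed



lemma deg_pos:
  fixes A :: "real^'n^'n"
  assumes c2: "CARD('n) \<ge> 2" and sa: "simple_adj A" and gc: "graph_connected A"
  shows "degree_vec A $ i > 0"
proof -
  have "UNIV \<noteq> {i}"
  proof
    assume h: "UNIV = {i}"
    have "card (UNIV::'n set) = card {i}" by (simp only: h)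
    then have "CARD('n) = 1" by simp
    then show False using c2 by simp
  qed
  then obtain j where j: "j \<noteq> i" by blast
  have "(\<lambda>a b. A$a$b = 1)\<^sup>*\<^sup>* i j" using gc unfolding graph_connected_def by blast
  then obtain u where u: "A$i$u = 1"
    by (cases rule: converse_rtranclpE) (use j in auto)
  have nn: "\<forall>j. A$i$j \<ge> 0" using sa unfolding simple_adj_def by (metis order_refl zero_le_one)
  have "A$i$u \<le> (\<Sum>j\<in>UNIV. A$i$j)" by (rule member_le_sum) (simp_all add: nn)
  then show ?thesis using u by (simp add: deg_eq)
qed

theorem theorem1:
  fixes A :: "real^'n^'n" and x :: "real^'n" and v :: 'n
    and c \<epsilon> :: real and N :: nat
  assumes "CARD('n) \<ge> 2"
    and "simple_adj A" and "graph_connected A"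
    and "\<forall>i. x $ i \<ge> 0"
    and "c > 1" and "N \<ge> 1" and "\<epsilon> > 0"
  shows "\<exists>K::nat. \<forall>(F :: filt set) (s :: filt \<Rightarrow> real).
           finite F \<and> F \<noteq> {}
         \<and> (\<forall>k. Agg k \<in> F \<longrightarrow> k \<ge> K)
         \<and> (\<forall>k1 k2. Comp k1 k2 \<in> F \<longrightarrow> k1 \<noteq> k2 \<and> k1 \<ge> K \<and> k2 \<ge> K)
         \<and> card {f\<in>F. is_comp f} \<le> N
         \<and> (\<forall>f\<in>F. s f \<ge> 0)
         \<and> Max (insert 0 (s ` {f\<in>F. is_comp f})) = c * Max (insert 0 (s ` {f\<in>F. is_agg f}))
         \<longrightarrow> (\<Sum>f\<in>{f\<in>F. is_comp f}. s f * filt_resp (lazy_walk A) x f $ v)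
             \<le> \<epsilon> * c * (\<Sum>f\<in>{f\<in>F. is_agg f}. s f * filt_resp (lazy_walk A) x f $ v)"
proof -
  note c2 = assms(1) and sa = assms(2) and gc = assms(3) and xnn = assms(4)
    and cpos = assms(5) and N1 = assms(6) and epos = assms(7)
  define d where "d = degree_vec A"
  define P where "P = lazy_walk A"
  define g0 where "g0 = (\<chi> j. x$j / d $ j)"
  define G where "G k = (Qop A ^^ k) g0" for k
  define h where "h k = walk_pow P k x $ v" for k
  have dp: "\<forall>i. degree_vec A $ i > 0" using deg_pos[OF c2 sa gc] by blast
  have nn: "\<forall>i j. A$i$j \<ge> 0" using sa unfolding simple_adj_def by (metis order_refl zero_le_one)
  have sym: "\<forall>i j. A$i$j = A$j$i" using sa unfolding simple_adj_def by blast
  obtain L where L: "\<forall>i w. \<exists>l\<le>L. ((\<lambda>a b. A$a$b = 1) ^^ l) i w" using conn_bound[OF gc] by blast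
  obtain Lm where Lm: "\<forall>i. (\<lambda>k. G k $ i) \<longlonglongrightarrow> Lm"
    using conv[OF nn dp L, of g0] unfolding G_def by blast
  have wf: "walk_pow P k x = (\<chi> i. d $ i * G k $ i)" for k
    using walk_formula[OF dp, of k x] unfolding P_def d_def G_def g0_def by simp
  show ?thesis
  proof (cases "\<forall>i. x$i = 0")
    case True
    then have x0: "x = 0" by (simp add: vec_eq_iff)
    have r0: "filt_resp (lazy_walk A) x f = 0" for f
      by (cases f) (simp_all add: x0 walk_pow_zero)
    show ?thesis by (intro exI[of _ 0] allI impI) (simp add: r0)
  next
    case False
    then obtain i0 where i0: "x$i0 \<noteq> 0" by blast
    have xi0: "x$i0 > 0" using i0 xnn[rule_format, of i0] by simp
    have mass: "(\<Sum>i\<in>UNIV. d $ i * G k $ i) = (\<Sum>i\<in>UNIV. x$i)" for k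
    proof -
      have "(\<Sum>i\<in>UNIV. d $ i * G k $ i) = (\<Sum>i\<in>UNIV. d $ i * g0 $ i)"
        unfolding G_def d_def by (rule Qpow_mass[OF sym dp])
      also have "\<dots> = (\<Sum>i\<in>UNIV. x$i)"
        using dp by (intro sum.cong refl) (simp add: g0_def d_def less_imp_neq[symmetric])
      finally show ?thesis .
    qed
    have xsum: "(\<Sum>i\<in>UNIV. x$i) > 0"
    proof -
      have "x$i0 \<le> (\<Sum>i\<in>UNIV. x$i)" by (rule member_le_sum) (simp_all add: xnn)
      then show ?thesis using xi0 by simp
    qed
    have "(\<lambda>k. \<Sum>i\<in>UNIV. d $ i * G k $ i) \<longlonglongrightarrow> (\<Sum>i\<in>UNIV. d $ i * Lm)"
      by (intro tendsto_intros Lm[rule_format])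
    then have "(\<lambda>k. \<Sum>i\<in>UNIV. x$i) \<longlonglongrightarrow> (\<Sum>i\<in>UNIV. d $ i * Lm)" by (simp add: mass)
    then have eqs: "(\<Sum>i\<in>UNIV. d $ i * Lm) = (\<Sum>i\<in>UNIV. x$i)"
      by (simp add: LIMSEQ_const_iff)
    have dsum: "(\<Sum>i\<in>UNIV. d $ i) > 0"
    proof -
      have "d $ v \<le> (\<Sum>i\<in>UNIV. d $ i)" by (rule member_le_sum) (simp_all add: d_def dp less_imp_le)
      then show ?thesis using dp by (simp add: d_def) (smt (verit))
    qed
    have "(\<Sum>i\<in>UNIV. d $ i) * Lm > 0" using eqs xsum by (simp add: sum_distrib_right)
    then have Lmpos: "Lm > 0" using dsum by (simp add: zero_less_mult_iff)
    define a where "a = d $ v * Lm"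
    have apos: "a > 0" unfolding a_def using Lmpos dp by (simp add: d_def)
    have hlim: "h \<longlonglongrightarrow> a"
      unfolding h_def wf a_def by (simp, intro tendsto_intros Lm[rule_format])
    define \<eta> where "\<eta> = min (a/2) (\<epsilon> * a / (4 * N))"
    have etapos: "\<eta> > 0" unfolding \<eta>_def using apos epos N1 by simp
    have eta1: "\<eta> \<le> a/2" and eta2: "4 * N * \<eta> \<le> \<epsilon> * a"
      unfolding \<eta>_def using N1 by (auto simp: field_simps min_def)
    obtain K where K: "\<forall>k\<ge>K. \<bar>h k - a\<bar> < \<eta>"
      using hlim etapos unfolding LIMSEQ_iff by (metis real_norm_def)
    show ?thesis
    proof (intro exI[of _ K] allI impI)
      fix F :: "filt set" and s :: "filt \<Rightarrow> real"
      assume H: "finite F \<and> F \<noteq> {}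
         \<and> (\<forall>k. Agg k \<in> F \<longrightarrow> k \<ge> K)
         \<and> (\<forall>k1 k2. Comp k1 k2 \<in> F \<longrightarrow> k1 \<noteq> k2 \<and> k1 \<ge> K \<and> k2 \<ge> K)
         \<and> card {f\<in>F. is_comp f} \<le> N
         \<and> (\<forall>f\<in>F. s f \<ge> 0)
         \<and> Max (insert 0 (s ` {f\<in>F. is_comp f})) = c * Max (insert 0 (s ` {f\<in>F. is_agg f}))"
      define C where "C = {f\<in>F. is_comp f}"
      define Ag where "Ag = {f\<in>F. is_agg f}"
      define mc where "mc = Max (insert 0 (s ` C))"
      define ma where "ma = Max (insert 0 (s ` Ag))"
      have fin: "finite F" using H by blast
      have finC: "finite C" and finA: "finite Ag" unfolding C_def Ag_def using fin by auto
      have snn: "\<forall>f\<in>F. s f \<ge> 0" using H by blast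
      have mceq: "mc = c * ma" unfolding mc_def ma_def C_def Ag_def using H by blast
      have cardC: "card C \<le> N" unfolding C_def using H by blast
      have Kagg: "\<forall>k. Agg k \<in> F \<longrightarrow> k \<ge> K" using H by blast
      have Kcomp: "\<forall>k1 k2. Comp k1 k2 \<in> F \<longrightarrow> k1 \<ge> K \<and> k2 \<ge> K" using H by blast
      have ma0: "ma \<ge> 0" unfolding ma_def using finA by (intro Max_ge) auto
      have mc0: "mc \<ge> 0" unfolding mc_def using finC by (intro Max_ge) auto
      have sle: "s f \<le> mc" if "f \<in> C" for f unfolding mc_def using finC that by (intro Max_ge) auto
      have termC: "s f * filt_resp (lazy_walk A) x f $ v \<le> mc * (2 * \<eta>)" if f: "f \<in> C" for f
      proof -
        obtain k1 k2 where fe: "f = Comp k1 k2" using f unfolding C_def is_comp_def by blast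
        have "Comp k1 k2 \<in> F" using f fe unfolding C_def by blast
        then have k: "k1 \<ge> K" "k2 \<ge> K" using Kcomp by blast+
        have r: "filt_resp (lazy_walk A) x f $ v = h k1 - h k2"
          unfolding fe h_def P_def by simp
        have "\<bar>h k1 - a\<bar> < \<eta>" "\<bar>h k2 - a\<bar> < \<eta>" using K k by blast+
        then have rb: "filt_resp (lazy_walk A) x f $ v \<le> 2 * \<eta>" unfolding r by linarith
        have s0: "s f \<ge> 0" using f snn unfolding C_def by blast
        have "s f * filt_resp (lazy_walk A) x f $ v \<le> s f * (2 * \<eta>)"
          by (rule mult_left_mono[OF rb s0])
        also have "\<dots> \<le> mc * (2 * \<eta>)" using sle[OF f] etapos by (simp add: mult_right_mono)
        finally show ?thesis .
      qed
      have sumC: "(\<Sum>f\<in>C. s f * filt_resp (lazy_walk A) x f $ v) \<le> N * (mc * (2 * \<eta>))"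
      proof -
        have "(\<Sum>f\<in>C. s f * filt_resp (lazy_walk A) x f $ v) \<le> of_nat (card C) * (mc * (2 * \<eta>))"
          by (rule sum_bounded_above) (rule termC)
        also have "\<dots> \<le> N * (mc * (2 * \<eta>))"
          using cardC mc0 etapos by (intro mult_right_mono) simp_all
        finally show ?thesis .
      qed
      have termA: "s f * filt_resp (lazy_walk A) x f $ v \<ge> s f * (a/2)" "s f * (a/2) \<ge> 0"
        if f: "f \<in> Ag" for f
      proof -
        obtain k where fe: "f = Agg k" using f unfolding Ag_def is_agg_def by blast
        have "Agg k \<in> F" using f fe unfolding Ag_def by blast
        then have k: "k \<ge> K" using Kagg by blast
        have r: "filt_resp (lazy_walk A) x f $ v = h k" unfolding fe h_def P_def by simp
        have "\<bar>h k - a\<bar> < \<eta>" using K k by blast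
        then have rb: "filt_resp (lazy_walk A) x f $ v \<ge> a/2" unfolding r using eta1 by linarith
        have s0: "s f \<ge> 0" using f snn unfolding Ag_def by blast
        show "s f * filt_resp (lazy_walk A) x f $ v \<ge> s f * (a/2)" by (rule mult_left_mono[OF rb s0])
        show "s f * (a/2) \<ge> 0" using s0 apos by simp
      qed
      have sumA: "(\<Sum>f\<in>Ag. s f * filt_resp (lazy_walk A) x f $ v) \<ge> ma * (a/2)"
      proof -
        have tnn: "\<forall>f\<in>Ag. s f * filt_resp (lazy_walk A) x f $ v \<ge> 0"
          using termA by (meson order_trans)
        have "ma \<in> insert 0 (s ` Ag)" unfolding ma_def using finA by (intro Max_in) auto
        then show ?thesis
        proof
          assume "ma = 0"
          then show ?thesis using tnn by (simp add: sum_nonneg)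
        next
          assume "ma \<in> s ` Ag"
          then obtain f0 where f0: "f0 \<in> Ag" "ma = s f0" by blast
          have "ma * (a/2) \<le> s f0 * filt_resp (lazy_walk A) x f0 $ v" using termA(1)[OF f0(1)] f0(2) by simp
          also have "\<dots> \<le> (\<Sum>f\<in>Ag. s f * filt_resp (lazy_walk A) x f $ v)"
            by (rule member_le_sum) (use f0 tnn finA in auto)
          finally show ?thesis .
        qed
      qed
      have cma: "c * ma \<ge> 0" using cpos ma0 by simp
      have "(\<Sum>f\<in>C. s f * filt_resp (lazy_walk A) x f $ v) \<le> (c * ma) * (2 * N * \<eta>)"
        using sumC mceq by (simp add: algebra_simps)
      also have "\<dots> \<le> (c * ma) * (\<epsilon> * a / 2)"
        using eta2 by (intro mult_left_mono cma) simp
      also have "\<dots> = \<epsilon> * c * (ma * (a/2))" by (simp add: algebra_simps)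
      also have "\<dots> \<le> \<epsilon> * c * (\<Sum>f\<in>Ag. s f * filt_resp (lazy_walk A) x f $ v)"
        using sumA epos cpos by (intro mult_left_mono) simp_all
      finally show "(\<Sum>f\<in>{f\<in>F. is_comp f}. s f * filt_resp (lazy_walk A) x f $ v)
             \<le> \<epsilon> * c * (\<Sum>f\<in>{f\<in>F. is_agg f}. s f * filt_resp (lazy_walk A) x f $ v)"
        unfolding C_def Ag_def .
    qed
  qed
qed

end
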